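(* Let $s=\sigma+it$ with $-1/2\le\sigma<0$ and $t\ge 1$. Then there is a complex number $E(\sigma,t)$ with $$|E(\sigma,t)|\le\frac{\pi}{4}+\frac{1-2\sigma}{2}+\frac{18\sigma^2-18\sigma+19}{12t}$$ such that $$\pi^{s-1/2}\frac{\Gamma\left(\frac{1-s}{2}\right)}{\Gamma\left(\frac s2\right)}=\left(\frac{(1-\sigma)^2+t^2}{4}\right)^{-\sigma/4}\left(\frac{\sigma^2+t^2}{4}\right)^{(1-\sigma)/4}\pi^{\sigma-\frac12}\exp\Big(\sigma-\tfrac12+it\left(-\log t+\log(2\pi)+1\right)+E(\sigma,t)\Big).$$ *)

theory Defs
  imports "HOL-Analysis.Analysis"
begin

end

theory Submission
  imports Defs
begin


lemma Im_Ln_neg: assumes "Im z < 0" shows "- pi < Im (Ln z) \<and> Im (Ln z) < 0"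
proof -
  have "z \<noteq> 0" using assms by auto
  then show ?thesis using Im_Ln_pos_le[of z] Im_Ln_le_pi[of z] mpi_less_Im_Ln[of z] assms
    by (smt (verit, ccfv_SIG) Im_Ln_le_pi complex_is_Real_iff nonpos_Reals_def)
qed

lemma Ln_eq_by_exp:
  assumes "exp a = exp b" "\<bar>Im a\<bar> < pi" "\<bar>Im b\<bar> < pi"
  shows "a = b"
proof -
  have "Ln (exp a) = a" using assms by (intro Ln_unique) auto
  moreover have "Ln (exp b) = b" using assms by (intro Ln_unique) auto
  ultimately show ?thesis using assms(1) by metis
qed

lemma Ln_diff_q:
  fixes u :: complex
  assumes "Im u \<noteq> 0" and q: "q = 1 / (2*u+1)" and qn: "norm q < 1"
  shows "Ln (u+1) - Ln u = Ln (1+q) - Ln (1-q)"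
proof (rule Ln_eq_by_exp)
  have u0: "u \<noteq> 0" "u + 1 \<noteq> 0" "2*u+1 \<noteq> 0" using assms(1) by (auto simp: complex_eq_iff)
  have r1: "Re (1+q) > 0" "Re (1-q) > 0" using qn abs_Re_le_cmod[of q] by auto
  have n1: "1 + q \<noteq> 0" "1 - q \<noteq> 0" using r1 by (metis less_irrefl zero_complex.sel(1))+
  have "exp (Ln (u+1) - Ln u) = (u+1)/u" using u0 by (simp add: exp_diff)
  also have "\<dots> = (1+q)/(1-q)"
  proof -
    have a: "1+q = (2*u+2)/(2*u+1)" "1-q = 2*u/(2*u+1)" using u0 unfolding q by (simp_all add: field_simps)
    have "(u+1)*(1-q) = (1+q)*u" unfolding a using u0 by (simp add: field_simps)
    then show ?thesis using u0 n1 by (simp add: frac_eq_eq)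
  qed
  also have "\<dots> = exp (Ln (1+q) - Ln (1-q))" using n1 by (simp add: exp_diff)
  finally show "exp (Ln (u+1) - Ln u) = exp (Ln (1+q) - Ln (1-q))" .
  show "\<bar>Im (Ln (1+q) - Ln (1-q))\<bar> < pi"
    using Re_Ln_pos_lt_imp[OF r1(1)] Re_Ln_pos_lt_imp[OF r1(2)] by simp
  show "\<bar>Im (Ln (u+1) - Ln u)\<bar> < pi"
  proof (cases "Im u > 0")
    case True
    then show ?thesis using Im_Ln_pos_lt_imp[of u] Im_Ln_pos_lt_imp[of "u+1"] by (simp add: abs_less_iff)
  next
    case False
    then have "Im u < 0" using assms(1) by simp
    then show ?thesis using Im_Ln_neg[of u] Im_Ln_neg[of "u+1"] by (simp add: abs_less_iff)
  qed
qed

lemma series_q: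
  fixes q :: complex
  assumes "norm q < 1" "q \<noteq> 0"
  shows "(\<lambda>j. q^(2*j+2) / of_nat (2*j+3)) sums ((Ln (1+q) - Ln (1-q)) / (2*q) - 1)"
proof -
  have s1: "(\<lambda>n. - ((-q)^n) / of_nat n) sums Ln (1 + q)" using Ln_series' assms by simp
  have s2: "(\<lambda>n. - ((-(-q))^n) / of_nat n) sums Ln (1 + -q)" using Ln_series'[of "-q"] assms by simp
  have "(\<lambda>n. - ((-q)^n) / of_nat n - - ((-(-q))^n) / of_nat n) sums (Ln (1+q) - Ln (1 + -q))"
    by (rule sums_diff[OF s1 s2])
  hence s3: "(\<lambda>n. (q^n - (-q)^n) / of_nat n) sums (Ln (1+q) - Ln (1-q))"
    by (simp add: diff_divide_distrib)
  have "(\<lambda>j. (\<lambda>n. (q^n - (-q)^n) / of_nat n) (2*j+1)) sums (Ln (1+q) - Ln (1-q))"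
  proof (subst sums_mono_reindex)
    show "strict_mono (\<lambda>j::nat. 2*j+1)" by (auto simp: strict_mono_def)
    show "(q^n - (-q)^n) / of_nat n = 0" if "n \<notin> range (\<lambda>j::nat. 2*j+1)" for n
    proof -
      have "even n" using that by (metis Suc_eq_plus1 oddE rangeI)
      then show ?thesis by simp
    qed
  qed (rule s3)
  hence "(\<lambda>j. 2 * q^(2*j+1) / of_nat (2*j+1)) sums (Ln (1+q) - Ln (1-q))" by simp
  hence "(\<lambda>j. 2 * q^(2*j+1) / of_nat (2*j+1) / (2*q)) sums ((Ln (1+q) - Ln (1-q)) / (2*q))"
    by (rule sums_divide)
  moreover have eq: "\<And>j. 2 * q^(2*j+1) / of_nat (2*j+1) / (2*q) = q^(2*j) / of_nat (2*j+1)"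
    using assms(2) by (simp add: power_add)
  ultimately have s4: "(\<lambda>j. q^(2*j) / of_nat (2*j+1)) sums ((Ln (1+q) - Ln (1-q)) / (2*q))"
    by (simp only: eq)
  have "(\<lambda>j. (\<lambda>j. q^(2*j) / of_nat (2*j+1)) (Suc j)) sums ((Ln (1+q) - Ln (1-q)) / (2*q) - 1)"
    using sums_Suc_iff[of "\<lambda>j. q^(2*j) / of_nat (2*j+1)"] s4 by simp
  then show ?thesis by (simp add: algebra_simps)
qed

definition phi :: "complex \<Rightarrow> complex" where
  "phi u = (u + 1/2) * (Ln (u+1) - Ln u) - 1"

lemma bseq_sums:
  fixes r :: real
  assumes "0 \<le> r" "r < 1"
  shows "(\<lambda>j. if j = 0 then r/3 else if j = 1 then r^2/5 else r^(j+1)/7) sums (r/3 + r^2/5 + r^3/(7*(1-r)))"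
proof -
  let ?b = "\<lambda>j::nat. if j = 0 then r/3 else if j = 1 then r^2/5 else r^(j+1)/7"
  have "(\<lambda>n. r^n) sums (1/(1-r))" using geometric_sums[of r] assms by simp
  hence "(\<lambda>n. r^3/7 * r^n) sums (r^3/7 * (1/(1-r)))" by (rule sums_mult)
  moreover have e: "\<And>i. ?b (i+2) = r^3/7 * r^i"
    by (simp add: power_add power3_eq_cube)
  ultimately have "(\<lambda>i. ?b (i+2)) sums (r^3/(7*(1-r)))" by (simp only: e) simp
  hence "?b sums (r^3/(7*(1-r)) + (\<Sum>i<2. ?b i))" by (rule iffD1[OF sums_iff_shift])
  moreover have "(\<Sum>i<2. ?b i) = r/3 + r^2/5" by (simp add: numeral_2_eq_2)
  ultimately show ?thesis by (simp add: algebra_simps)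
qed

lemma phi_bound:
  fixes u :: complex
  assumes "Im u \<noteq> 0" and r: "r = 1 / (norm (2*u+1))^2" and r1: "r < 1"
  shows "norm (phi u) \<le> r/3 + r^2/5 + r^3/(7*(1-r))"
proof -
  define q where "q = 1 / (2*u+1)"
  have u0: "2*u+1 \<noteq> 0" using assms(1) by (auto simp: complex_eq_iff)
  have nq: "norm q ^ 2 = r" unfolding q_def r by (simp add: norm_divide power_divide)
  have r0: "0 \<le> r" unfolding r by simp
  have qn: "norm q < 1"
  proof (rule ccontr)
    assume "\<not> norm q < 1"
    then have "1 \<le> norm q" by simp
    then have "1 \<le> norm q ^ 2" by (simp add: one_le_power)
    then show False using nq r1 by simp
  qed
  have q0: "q \<noteq> 0" unfolding q_def using u0 by simp
  have "phi u = (Ln (1+q) - Ln (1-q)) / (2*q) - 1"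
    unfolding phi_def Ln_diff_q[OF assms(1) q_def qn] using u0 by (simp add: q_def field_simps)
  with series_q[OF qn q0] have S: "(\<lambda>j. q^(2*j+2) / of_nat (2*j+3)) sums (phi u)" by simp
  let ?b = "\<lambda>j::nat. if j = 0 then r/3 else if j = 1 then r^2/5 else r^(j+1)/7"
  have B: "?b sums (r/3 + r^2/5 + r^3/(7*(1-r)))" by (rule bseq_sums[OF r0 r1])
  have le: "norm (q^(2*j+2) / of_nat (2*j+3)) \<le> ?b j" for j
  proof -
    have e: "norm (q^(2*j+2) / of_nat (2*j+3)) = r^(j+1) / (2*j+3)"
    proof -
      have "norm q^(2*j+2) = (norm q^2)^(j+1)"
        by (metis power_mult mult_2 add_mult_distrib2 mult_1_right)
      then have "norm (q^(2*j+2)) = r^(j+1)" by (simp only: norm_power nq)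
      moreover have "norm (of_nat (2*j+3) :: complex) = 2*j+3" by (simp only: norm_of_nat)
      ultimately show ?thesis by (simp only: norm_divide)
    qed
    have "r^(j+1) / (2*j+3) \<le> ?b j"
    proof (cases "j \<ge> 2")
      case True
      have "r^(j+1)/(2*j+3) \<le> r^(j+1)/7"
        by (rule divide_left_mono) (use True r0 in auto)
      then show ?thesis using True by simp
    next
      case False
      then have "j = 0 \<or> j = 1" by auto
      then show ?thesis by (auto simp: power2_eq_square)
    qed
    then show ?thesis using e by simp
  qed
  have sn: "summable (\<lambda>j. norm (q^(2*j+2) / of_nat (2*j+3)))"
    by (rule summable_comparison_test[OF _ sums_summable[OF B]]) (use le in auto)
  have "norm (phi u) \<le> (\<Sum>j. norm (q^(2*j+2) / of_nat (2*j+3)))"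
    using summable_norm[OF sn] S by (simp add: sums_iff)
  also have "\<dots> \<le> suminf ?b" by (rule suminf_le[OF le sn sums_summable[OF B]])
  also have "\<dots> = r/3 + r^2/5 + r^3/(7*(1-r))" using B by (simp add: sums_iff)
  finally show ?thesis .
qed

lemma shift_nonzero: "Im u \<noteq> 0 \<Longrightarrow> u + of_nat k \<noteq> 0" for u :: complex
  by (auto simp: complex_eq_iff)

lemma tele:
  fixes u :: complex
  assumes "Im u \<noteq> 0"
  shows "(\<Sum>k<n. phi (u + of_nat k)) =
         (u + of_nat n + 1/2) * Ln (u + of_nat n) - (u - 1/2) * Ln u - (\<Sum>j\<le>n. Ln (u + of_nat j)) - of_nat n"
proof (induction n)
  case 0
  then show ?case by (simp add: algebra_simps)
next
  case (Suc n)
  have "(\<Sum>k<Suc n. phi (u + of_nat k)) = (\<Sum>k<n. phi (u + of_nat k)) + phi (u + of_nat n)" by simp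
  also have "\<dots> = (u + of_nat n + 1/2) * Ln (u + of_nat n) - (u - 1/2) * Ln u - (\<Sum>j\<le>n. Ln (u + of_nat j)) - of_nat n
     + ((u + of_nat n + 1/2) * (Ln (u + of_nat (Suc n)) - Ln (u + of_nat n)) - 1)"
    unfolding Suc.IH by (simp add: phi_def add_ac)
  also have "\<dots> = (u + of_nat (Suc n) + 1/2) * Ln (u + of_nat (Suc n)) - (u - 1/2) * Ln u - (\<Sum>j\<le>Suc n. Ln (u + of_nat j)) - of_nat (Suc n)"
    by (simp add: algebra_simps)
  finally show ?case .
qed

definition Tn :: "nat \<Rightarrow> complex \<Rightarrow> complex" where
  "Tn n u = u - (u + of_nat n + 1/2) * Ln (1 + u / of_nat n)"

lemma Gamma_series_repr:
  fixes u :: complex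
  assumes "Im u \<noteq> 0" "n \<ge> 1"
  shows "Gamma_series u n = fact n * exp (of_real (of_nat n - (of_nat n + 1/2) * ln (of_nat n)))
           * exp ((\<Sum>k<n. phi (u + of_nat k)) + (u - 1/2) * Ln u - u + Tn n u)"
proof -
  have nz: "\<And>j. u + of_nat j \<noteq> 0" using shift_nonzero[OF assms(1)] by blast
  have "pochhammer u (n+1) = (\<Prod>j\<le>n. u + of_nat j)"
    by (simp add: pochhammer_prod atLeast0LessThan lessThan_Suc_atMost)
  also have "\<dots> = (\<Prod>j\<le>n. exp (Ln (u + of_nat j)))" using nz by simp
  also have "\<dots> = exp (\<Sum>j\<le>n. Ln (u + of_nat j))" by (simp add: exp_sum)
  finally have P: "pochhammer u (n+1) = exp (\<Sum>j\<le>n. Ln (u + of_nat j))" .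
  have n0: "real n > 0" using assms(2) by simp
  have L: "Ln (u + of_nat n) = of_real (ln (of_nat n)) + Ln (1 + u / of_nat n)"
  proof -
    have "u + of_nat n = of_real (real n) * (1 + u / of_nat n)" using n0 by (simp add: field_simps)
    moreover have "1 + u / of_nat n \<noteq> 0" using nz[of n] n0 by (simp add: field_simps)
    moreover have "Ln (of_nat n) = of_real (ln (of_nat n))" by (metis Ln_of_real n0 of_real_of_nat_eq)
    ultimately show ?thesis using Ln_times_of_real[OF n0] by simp
  qed
  have "Gamma_series u n = fact n * exp (u * of_real (ln (of_nat n))) / exp (\<Sum>j\<le>n. Ln (u + of_nat j))"
    unfolding Gamma_series_def P by simp
  also have "\<dots> = fact n * exp (u * of_real (ln (of_nat n)) - (\<Sum>j\<le>n. Ln (u + of_nat j)))"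
    by (simp add: exp_diff)
  also have "u * of_real (ln (of_nat n)) - (\<Sum>j\<le>n. Ln (u + of_nat j)) =
      of_real (of_nat n - (of_nat n + 1/2) * ln (of_nat n)) + ((\<Sum>k<n. phi (u + of_nat k)) + (u - 1/2) * Ln u - u + Tn n u)"
    unfolding tele[OF assms(1)] Tn_def L by (simp add: algebra_simps)
  also have "fact n * exp \<dots> = fact n * exp (of_real (of_nat n - (of_nat n + 1/2) * ln (of_nat n)))
           * exp ((\<Sum>k<n. phi (u + of_nat k)) + (u - 1/2) * Ln u - u + Tn n u)"
    by (simp add: exp_add)
  finally show ?thesis .
qed

lemma Tn_lim:
  fixes u :: complex
  shows "(\<lambda>n. Tn n u) \<longlonglongrightarrow> 0"
proof -
  have A: "(\<lambda>n. (u + 1/2) * Ln (1 + u / of_nat n)) \<longlonglongrightarrow> (u + 1/2) * Ln (1 + 0)"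
    by (intro tendsto_intros) auto
  have B: "(\<lambda>n. of_nat n * Ln (1 + u / of_nat n) - u) \<longlonglongrightarrow> 0"
  proof (rule Lim_null_comparison)
    show "(\<lambda>n. 2 * norm u ^ 2 / of_nat n) \<longlonglongrightarrow> 0" by (rule lim_const_over_n)
    obtain N :: nat where N: "N \<ge> 2 * norm u + 1" using real_arch_simple by blast
    show "\<forall>\<^sub>F n in sequentially. norm (of_nat n * Ln (1 + u / of_nat n) - u) \<le> 2 * norm u ^ 2 / of_nat n"
    proof (rule eventually_sequentiallyI[of N])
      fix n assume nN: "N \<le> n"
      have n0: "real n > 0" using N nN by (smt (verit) norm_ge_zero of_nat_le_iff)
      have nu: "2 * norm u \<le> real n" using N nN by (smt (verit) of_nat_le_iff)
      define x where "x = u / of_nat n"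
      have nx: "norm x = norm u / n" unfolding x_def by (simp add: norm_divide)
      have nx2: "norm x \<le> 1/2" unfolding nx using n0 nu by (simp add: field_simps)
      have "norm (Ln (1 + x) - x) \<le> norm x ^ 2 / (1 - norm x)"
        by (rule Ln_approx_linear) (use nx2 in simp)
      also have "\<dots> \<le> norm x ^ 2 / (1/2)"
        by (rule divide_left_mono) (use nx2 in auto)
      finally have le: "norm (Ln (1 + x) - x) \<le> 2 * norm x ^ 2" by simp
      have "of_nat n * Ln (1 + u / of_nat n) - u = of_nat n * (Ln (1 + x) - x)"
        unfolding x_def using n0 by (simp add: field_simps)
      hence "norm (of_nat n * Ln (1 + u / of_nat n) - u) = n * norm (Ln (1 + x) - x)"
        by (simp add: norm_mult)
      also have "\<dots> \<le> n * (2 * norm x ^ 2)" using le n0 by simp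
      also have "\<dots> = 2 * norm u ^ 2 / n" unfolding nx using n0 by (simp add: field_simps power2_eq_square)
      finally show "norm (of_nat n * Ln (1 + u / of_nat n) - u) \<le> 2 * norm u ^ 2 / of_nat n" .
    qed
  qed
  have "(\<lambda>n. - (of_nat n * Ln (1 + u / of_nat n) - u) - (u + 1/2) * Ln (1 + u / of_nat n)) \<longlonglongrightarrow> - 0 - (u + 1/2) * Ln (1 + 0)"
    by (intro tendsto_intros A B)
  moreover have "\<And>n. Tn n u = - (of_nat n * Ln (1 + u / of_nat n) - u) - (u + 1/2) * Ln (1 + u / of_nat n)"
    unfolding Tn_def by (simp add: algebra_simps)
  ultimately show ?thesis by simp
qed

definition FF :: "complex \<Rightarrow> complex" where
  "FF u = (\<Sum>k. phi (u + of_nat k)) + (u - 1/2) * Ln u - u"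

lemma Gamma_ratio:
  fixes w z :: complex
  assumes "Im w \<noteq> 0" "Im z \<noteq> 0"
    and sw: "summable (\<lambda>k. phi (w + of_nat k))" and sz: "summable (\<lambda>k. phi (z + of_nat k))"
  shows "Gamma w / Gamma z = exp (FF w - FF z)"
proof -
  define F where "F n u = (\<Sum>k<n. phi (u + of_nat k)) + (u - 1/2) * Ln u - u + Tn n u" for n u
  have FL: "(\<lambda>n. F n u) \<longlonglongrightarrow> FF u" if "summable (\<lambda>k. phi (u + of_nat k))" for u
  proof -
    have "(\<lambda>n. (\<Sum>k<n. phi (u + of_nat k)) + (u - 1/2) * Ln u - u + Tn n u) \<longlonglongrightarrow>
          (\<Sum>k. phi (u + of_nat k)) + (u - 1/2) * Ln u - u + 0"
      by (intro tendsto_intros summable_LIMSEQ that Tn_lim)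
    then show ?thesis unfolding F_def FF_def by simp
  qed
  have z0: "z \<notin> \<int>\<^sub>\<le>\<^sub>0" using assms(2) by (auto elim!: nonpos_Ints_cases simp: complex_eq_iff)
  have G0: "Gamma z \<noteq> 0" using Gamma_nonzero[OF z0] .
  have L1: "(\<lambda>n. Gamma_series w n / Gamma_series z n) \<longlonglongrightarrow> Gamma w / Gamma z"
    by (intro tendsto_divide Gamma_series_LIMSEQ G0)
  have ev: "\<forall>\<^sub>F n in sequentially. Gamma_series w n / Gamma_series z n = exp (F n w - F n z)"
  proof (rule eventually_sequentiallyI[of 1])
    fix n :: nat assume n: "1 \<le> n"
    let ?c = "fact n * exp (complex_of_real (of_nat n - (of_nat n + 1/2) * ln (of_nat n)))"
    have c0: "?c \<noteq> 0" by simp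
    have "Gamma_series w n / Gamma_series z n = (?c * exp (F n w)) / (?c * exp (F n z))"
      unfolding Gamma_series_repr[OF assms(1) n] Gamma_series_repr[OF assms(2) n] F_def ..
    also have "\<dots> = exp (F n w - F n z)" using c0 by (simp add: exp_diff)
    finally show "Gamma_series w n / Gamma_series z n = exp (F n w - F n z)" .
  qed
  have L2: "(\<lambda>n. exp (F n w - F n z)) \<longlonglongrightarrow> exp (FF w - FF z)"
    by (intro tendsto_intros FL sw sz)
  have L3: "(\<lambda>n. Gamma_series w n / Gamma_series z n) \<longlonglongrightarrow> exp (FF w - FF z)"
    using L2 ev by (rule Lim_transform_eventually[OF _ eventually_mono]) auto
  show ?thesis using LIMSEQ_unique[OF L1 L3] .
qed

lemma tele_step:
  fixes a T :: real
  assumes "a - 1 + T > 0"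
  shows "1/(a^2+T^2) \<le> 1/(a-1+T) - 1/(a+1+T)"
proof -
  have P: "(a-1+T)*(a+1+T) \<le> 2*(a^2+T^2)"
    using zero_le_power2[of "a-T"] by (simp add: power2_eq_square algebra_simps)
  have p1: "(a-1+T)*(a+1+T) > 0" using assms by simp
  have "a^2+T^2 > 0" using assms by (smt (verit) power2_less_0 sum_power2_gt_zero_iff)
  have "1/(a-1+T) - 1/(a+1+T) = 2/((a-1+T)*(a+1+T))" using assms by (simp add: field_simps)
  moreover have "1/(a^2+T^2) \<le> 2/((a-1+T)*(a+1+T))"
    using P p1 \<open>a^2+T^2 > 0\<close> by (simp add: field_simps)
  ultimately show ?thesis by simp
qed

lemma tele_sum:
  fixes c T :: real
  assumes "c - 1 + T > 0" "c \<ge> 0"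
  shows "(\<Sum>k<n. 1/((c + 2* of_nat k)^2+T^2)) \<le> 1/(c-1+T) - 1/(c + 2* of_nat n - 1 + T)"
proof (induction n)
  case 0 then show ?case by simp
next
  case (Suc n)
  have "1/((c + 2* of_nat n)^2+T^2) \<le> 1/((c + 2* of_nat n)-1+T) - 1/((c + 2* of_nat n)+1+T)"
    by (rule tele_step) (use assms in simp)
  then show ?case using Suc.IH by (simp add: algebra_simps)
qed

lemma fr_mono:
  fixes r R :: real
  assumes "0 \<le> r" "r \<le> R" "R < 1"
  shows "r/3 + r^2/5 + r^3/(7*(1-r)) \<le> r * (1/3 + R/5 + R^2/(7*(1-R)))"
proof -
  have "r^2/5 \<le> r * (R/5)" using assms by (simp add: power2_eq_square mult_left_mono)
  moreover have "r^3/(7*(1-r)) \<le> r * (R^2/(7*(1-R)))"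
  proof -
    have "r^2 \<le> R^2" using assms by (simp add: power_mono)
    moreover have "7*(1-R) \<le> 7*(1-r)" using assms by simp
    ultimately have "r^2/(7*(1-r)) \<le> R^2/(7*(1-R))"
      using assms by (intro frac_le) auto
    then have h: "r * (r^2/(7*(1-r))) \<le> r * (R^2/(7*(1-R)))" by (rule mult_left_mono) (use assms in auto)
    have eq: "r^3/(7*(1-r)) = r * (r^2/(7*(1-r)))" by (simp add: power3_eq_cube power2_eq_square)
    show ?thesis unfolding eq by (rule h)
  qed
  ultimately show ?thesis by (simp add: algebra_simps)
qed

lemma sum_phi_bound:
  fixes u :: complex and c T R :: real
  assumes "Im u \<noteq> 0" "c = 2*Re u + 1" "T = 2*\<bar>Im u\<bar>" "c \<ge> 0" "c - 1 + T > 0"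
    "1/(c^2+T^2) \<le> R" "R < 1"
  shows "summable (\<lambda>k. norm (phi (u + of_nat k)))"
    and "(\<Sum>k. norm (phi (u + of_nat k))) \<le> (1/3 + R/5 + R^2/(7*(1-R))) / (c - 1 + T)"
proof -
  define K where "K = 1/3 + R/5 + R^2/(7*(1-R))"
  have cT: "c^2 + T^2 > 0" using assms(5) assms(4) by (smt (verit) power2_less_0 sum_power2_gt_zero_iff)
  have R0: "R > 0" using assms(6) cT by (smt (verit) divide_pos_pos)
  have K0: "K \<ge> 0" unfolding K_def using R0 assms(7) by simp
  have each: "norm (phi (u + of_nat k)) \<le> K * (1/((c + 2* of_nat k)^2+T^2))" for k
  proof -
    define r where "r = 1 / (norm (2*(u + of_nat k)+1))^2"
    have nn: "(norm (2*(u + of_nat k)+1))^2 = (c + 2* of_nat k)^2+T^2"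
      unfolding cmod_power2 using assms(2,3) by (simp add: power2_abs algebra_simps)
    have r_eq: "r = 1/((c + 2* of_nat k)^2+T^2)" unfolding r_def nn ..
    have "c^2 \<le> (c + 2* of_nat k)^2" using assms(4) by (simp add: power_mono)
    hence "1/((c + 2* of_nat k)^2+T^2) \<le> 1/(c^2+T^2)" using cT by (intro divide_left_mono) auto
    hence rR: "r \<le> R" using assms(6) r_eq by simp
    have r0: "0 \<le> r" unfolding r_def by simp
    have "Im (u + of_nat k) \<noteq> 0" using assms(1) by simp
    from phi_bound[OF this r_def] rR assms(7)
    have "norm (phi (u + of_nat k)) \<le> r/3 + r^2/5 + r^3/(7*(1-r))" by simp
    also have "\<dots> \<le> r * K" unfolding K_def by (rule fr_mono[OF r0 rR assms(7)])
    finally show ?thesis using r_eq by (simp add: mult.commute)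
  qed
  have ps: "(\<Sum>k<n. norm (phi (u + of_nat k))) \<le> K / (c - 1 + T)" for n
  proof -
    have "(\<Sum>k<n. norm (phi (u + of_nat k))) \<le> (\<Sum>k<n. K * (1/((c + 2* of_nat k)^2+T^2)))"
      by (intro sum_mono each)
    also have "\<dots> = K * (\<Sum>k<n. 1/((c + 2* of_nat k)^2+T^2))" by (simp add: sum_distrib_left)
    also have "\<dots> \<le> K * (1/(c-1+T) - 1/(c + 2* of_nat n - 1 + T))"
      by (intro mult_left_mono tele_sum K0) (use assms in auto)
    also have "\<dots> \<le> K * (1/(c-1+T))"
      using assms(4,5) K0 by (intro mult_left_mono) auto
    finally show ?thesis by simp
  qed
  show sm: "summable (\<lambda>k. norm (phi (u + of_nat k)))"
    by (rule summableI_nonneg_bounded[OF _ ps]) simp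
  show "(\<Sum>k. norm (phi (u + of_nat k))) \<le> K / (c - 1 + T)"
    by (rule suminf_le_const[OF sm ps])
qed

lemma numeric_D:
  fixes \<sigma> t P0 Sw Sz r0 :: real
  assumes "-1/2 \<le> \<sigma>" "\<sigma> < 0" "t \<ge> 1" and r0: "r0 = 1/((\<sigma>+1)^2+t^2)"
    and P0: "P0 \<le> r0/3 + r0^2/5 + r0^3/(7*(1-r0))"
    and Sw: "Sw \<le> (2/5)/(1-\<sigma>+t)" and Sz: "Sz \<le> (2/5)/(\<sigma>+2+t)"
  shows "t * (Sw + P0 + Sz) \<le> 4/3"
proof -
  have h1: "(\<sigma>+1)^2 \<ge> 1/4"
  proof -
    have "1/2 \<le> \<sigma>+1" using assms by simp
    then have "(1/2)^2 \<le> (\<sigma>+1)^2" by (intro power_mono) auto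
    then show ?thesis by (simp add: power2_eq_square)
  qed
  have t2: "t^2 \<ge> 1" using assms(3) by (simp add: one_le_power)
  have r0pos: "0 \<le> r0" using r0 by simp
  have r0rho: "r0 \<le> 1/(1/4+t^2)" unfolding r0 using h1 t2 by (intro divide_left_mono) auto
  have tSw: "t * Sw \<le> (2/5) * (t/(1+t))"
  proof -
    have "t * Sw \<le> t * ((2/5)/(1-\<sigma>+t))" using Sw assms(1-3) by (intro mult_left_mono) auto
    also have "\<dots> = (2/5) * (t/(1-\<sigma>+t))" by simp
    also have "\<dots> \<le> (2/5) * (t/(1+t))" using assms(1-3) by (intro mult_left_mono divide_left_mono) auto
    finally show ?thesis .
  qed
  have tSz: "t * Sz \<le> (2/5) * (t/(3/2+t))"
  proof -
    have "t * Sz \<le> t * ((2/5)/(\<sigma>+2+t))" using Sz assms(1-3) by (intro mult_left_mono) auto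
    also have "\<dots> = (2/5) * (t/(\<sigma>+2+t))" by simp
    also have "\<dots> \<le> (2/5) * (t/(3/2+t))" using assms(1-3) by (intro mult_left_mono divide_left_mono) auto
    finally show ?thesis .
  qed
  have a1: "t/(1+t) \<le> 1" "t/(3/2+t) \<le> 1" using assms(1-3) by auto
  show ?thesis
  proof (cases "t \<le> 2")
    case True
    have rho: "1/(1/4+t^2) \<le> 4/5" using t2 by (simp add: field_simps)
    have trho: "t * (1/(1/4+t^2)) \<le> 4/5"
    proof -
      have "(4*t-1)*(t-1) \<ge> 0" using assms(3) by simp
      then have "5*t \<le> 1 + 4*t^2" by (simp add: algebra_simps power2_eq_square)
      then show ?thesis using t2 by (simp add: field_simps)
    qed
    have "P0 \<le> r0 * (1/3 + (4/5)/5 + (4/5)^2/(7*(1-4/5)))"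
      using P0 fr_mono[OF r0pos _ , of "4/5"] r0rho rho by simp
    hence "t * P0 \<le> t * (r0 * (1/3 + (4/5)/5 + (4/5)^2/(7*(1-4/5))))"
      by (rule mult_left_mono) (use assms(3) in simp)
    hence "t * P0 \<le> (t * r0) * (1/3 + (4/5)/5 + (4/5)^2/(7*(1-4/5)))" by (simp only: mult.assoc)
    moreover have "t * r0 \<le> 4/5"
    proof -
      have "t * r0 \<le> t * (1/(1/4+t^2))" by (rule mult_left_mono[OF r0rho]) (use assms(3) in simp)
      then show ?thesis using trho by linarith
    qed
    moreover have "(1/3 + (4/5)/5 + (4/5)^2/(7*(1-4/5))::real) \<ge> 0" by simp
    ultimately have tP: "t * P0 \<le> (4/5) * (1/3 + (4/5)/5 + (4/5)^2/(7*(1-4/5)))"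
      by (meson order_trans mult_right_mono)
    have b1: "t/(1+t) \<le> 2/3" using True assms(1-3) by (simp add: field_simps)
    have b2: "t/(3/2+t) \<le> 4/7" using True assms(1-3) by (simp add: field_simps)
    have "t * (Sw + P0 + Sz) = t*Sw + t*P0 + t*Sz" by (simp add: algebra_simps)
    also have "\<dots> \<le> (2/5)*(2/3) + (4/5) * (1/3 + (4/5)/5 + (4/5)^2/(7*(1-4/5))) + (2/5)*(4/7)"
      using tSw tSz tP b1 b2 by linarith
    also have "\<dots> \<le> 4/3" by (simp add: power2_eq_square)
    finally show ?thesis .
  next
    case False
    have rho: "1/(1/4+t^2) \<le> 4/17"
    proof -
      have "2*2 \<le> t*t" using False by (intro mult_mono) auto
      then have "t^2 \<ge> 4" by (simp add: power2_eq_square)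
      then show ?thesis by (simp add: field_simps)
    qed
    have trho: "t * (1/(1/4+t^2)) \<le> 8/17"
    proof -
      have "(8*t-1)*(t-2) \<ge> 0" using False by simp
      then have "17*t \<le> 2 + 8*t^2" by (simp add: algebra_simps power2_eq_square)
      then show ?thesis using t2 by (simp add: field_simps)
    qed
    have "P0 \<le> r0 * (1/3 + (4/17)/5 + (4/17)^2/(7*(1-4/17)))"
      using P0 fr_mono[OF r0pos _ , of "4/17"] r0rho rho by simp
    hence "t * P0 \<le> t * (r0 * (1/3 + (4/17)/5 + (4/17)^2/(7*(1-4/17))))"
      by (rule mult_left_mono) (use assms(3) in simp)
    hence "t * P0 \<le> (t * r0) * (1/3 + (4/17)/5 + (4/17)^2/(7*(1-4/17)))" by (simp only: mult.assoc)
    moreover have "t * r0 \<le> 8/17"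
    proof -
      have "t * r0 \<le> t * (1/(1/4+t^2))" by (rule mult_left_mono[OF r0rho]) (use assms(3) in simp)
      then show ?thesis using trho by linarith
    qed
    moreover have "(1/3 + (4/17)/5 + (4/17)^2/(7*(1-4/17))::real) \<ge> 0" by simp
    ultimately have tP: "t * P0 \<le> (8/17) * (1/3 + (4/17)/5 + (4/17)^2/(7*(1-4/17)))"
      by (meson order_trans mult_right_mono)
    have "t * (Sw + P0 + Sz) = t*Sw + t*P0 + t*Sz" by (simp add: algebra_simps)
    also have "\<dots> \<le> (2/5) + (8/17) * (1/3 + (4/17)/5 + (4/17)^2/(7*(1-4/17))) + (2/5)"
      using tSw tSz tP a1 by linarith
    also have "\<dots> \<le> 4/3" by (simp add: power2_eq_square)
    finally show ?thesis .
  qed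
qed

lemma arg_w:
  fixes a t :: real
  assumes "a > 0" "t > 0"
  shows "Im (Ln (Complex (a/2) (-t/2))) = arctan (a/t) - pi/2"
proof -
  have ne: "Complex (a/2) (-t/2) \<noteq> 0" using assms by (simp add: complex_eq_iff)
  have "Im (Ln (Complex (a/2) (-t/2))) = arctan ((-t/2)/(a/2))"
    using Im_Ln_eq[OF ne] assms by simp
  also have "(-t/2)/(a/2) = - (1/(a/t))" using assms by (simp add: field_simps)
  also have "arctan (- (1/(a/t))) = - arctan (1/(a/t))" by (rule arctan_minus)
  also have "arctan (1/(a/t)) = sgn (a/t) * pi/2 - arctan (a/t)" by (rule Transcendental.arctan_inverse) (use assms in simp)
  also have "sgn (a/t) = 1" using assms by simp
  finally show ?thesis by simp
qed

lemma arg_z: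
  fixes s t :: real
  assumes "s < 0" "t > 0"
  shows "Im (Ln (Complex (s/2) (t/2))) = pi/2 + arctan (-s/t)"
proof -
  have ne: "Complex (s/2) (t/2) \<noteq> 0" using assms by (simp add: complex_eq_iff)
  have "Im (Ln (Complex (s/2) (t/2))) = arctan ((t/2)/(s/2)) + pi"
    using Im_Ln_eq[OF ne] assms by simp
  also have "(t/2)/(s/2) = 1/(s/t)" using assms by (simp add: field_simps)
  also have "arctan (1/(s/t)) = sgn (s/t) * pi/2 - arctan (s/t)" by (rule Transcendental.arctan_inverse) (use assms in simp)
  also have "sgn (s/t) = -1" using assms by (simp add: divide_neg_pos)
  also have "arctan (s/t) = - arctan (-s/t)" using arctan_minus[of "-s/t"] by simp
  finally show ?thesis by simp
qed

lemma bounds_M: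
  fixes \<sigma> t :: real
  assumes "-1/2 \<le> \<sigma>" "\<sigma> < 0" "t \<ge> 1"
  defines "a \<equiv> 1 - \<sigma>" and "b \<equiv> - \<sigma>"
  shows "\<bar>t/2 * (arctan (a/t) + arctan (b/t))\<bar> \<le> (1 - 2*\<sigma>)/2"
    and "\<bar>pi/4 + (b * arctan (a/t) + a * arctan (b/t))/2 - t/4 * (ln (1 + a^2/t^2) + ln (1 + b^2/t^2))\<bar>
           \<le> pi/4 + (a*b + (a^2+b^2)/4)/t"
proof -
  have a0: "a > 0" "b > 0" using assms by (auto simp: a_def b_def)
  have t0: "t > 0" using assms by simp
  have al: "0 \<le> arctan (a/t)" "arctan (a/t) \<le> a/t" using a0 t0 by (simp_all add: arctan_le_self)
  have be: "0 \<le> arctan (b/t)" "arctan (b/t) \<le> b/t" using a0 t0 by (simp_all add: arctan_le_self)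
  have "t/2 * (arctan (a/t) + arctan (b/t)) \<le> t/2 * (a/t + b/t)"
    using al be t0 by (intro mult_left_mono) auto
  also have "\<dots> = (1 - 2*\<sigma>)/2" using t0 by (simp add: field_simps a_def b_def)
  finally show "\<bar>t/2 * (arctan (a/t) + arctan (b/t))\<bar> \<le> (1 - 2*\<sigma>)/2"
    using al be t0 by simp
  define X where "X = (b * arctan (a/t) + a * arctan (b/t))/2"
  define Y where "Y = t/4 * (ln (1 + a^2/t^2) + ln (1 + b^2/t^2))"
  have X0: "0 \<le> X" unfolding X_def using al be a0 by simp
  have "b * arctan (a/t) \<le> b * (a/t)" using al a0 by (intro mult_left_mono) auto
  moreover have "a * arctan (b/t) \<le> a * (b/t)" using be a0 by (intro mult_left_mono) auto
  ultimately have "X \<le> (b*(a/t) + a*(b/t))/2" unfolding X_def by (intro divide_right_mono add_mono) auto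
  also have "\<dots> = a*b/t" by (simp add: field_simps)
  finally have X1: "X \<le> a*b/t" .
  have l1: "0 \<le> ln (1 + a^2/t^2)" "ln (1 + a^2/t^2) \<le> a^2/t^2"
    using ln_add_one_self_le_self[of "a^2/t^2"] by simp_all
  have l2: "0 \<le> ln (1 + b^2/t^2)" "ln (1 + b^2/t^2) \<le> b^2/t^2"
    using ln_add_one_self_le_self[of "b^2/t^2"] by simp_all
  have Y0: "0 \<le> Y" unfolding Y_def using l1 l2 t0 by simp
  have "Y \<le> t/4 * (a^2/t^2 + b^2/t^2)" unfolding Y_def using l1 l2 t0 by (intro mult_left_mono) auto
  also have "\<dots> = (a^2+b^2)/(4*t)" using t0 by (simp add: field_simps power2_eq_square)
  finally have Y1: "Y \<le> (a^2+b^2)/(4*t)" .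
  have "(a*b + (a^2+b^2)/4)/t = a*b/t + (a^2+b^2)/(4*t)" using t0 by (simp add: field_simps)
  then show "\<bar>pi/4 + (b * arctan (a/t) + a * arctan (b/t))/2 - t/4 * (ln (1 + a^2/t^2) + ln (1 + b^2/t^2))\<bar>
           \<le> pi/4 + (a*b + (a^2+b^2)/4)/t"
    using X0 X1 Y0 Y1 pi_gt_zero unfolding X_def[symmetric] Y_def[symmetric] by linarith
qed



theorem lemma3p10:
  fixes \<sigma> t :: real
  assumes "-1/2 \<le> \<sigma>" and "\<sigma> < 0" and "t \<ge> 1"
  shows "\<exists>E::complex.
    norm E \<le> pi/4 + (1 - 2*\<sigma>)/2 + (18*\<sigma>^2 - 18*\<sigma> + 19)/(12*t) \<and>
    complex_of_real pi powr (Complex \<sigma> t - 1/2) * Gamma ((1 - Complex \<sigma> t)/2) / Gamma (Complex \<sigma> t / 2)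
    = complex_of_real ((((1-\<sigma>)^2 + t^2)/4) powr (-\<sigma>/4) * ((\<sigma>^2 + t^2)/4) powr ((1-\<sigma>)/4)
        * pi powr (\<sigma> - 1/2))
      * exp (complex_of_real (\<sigma> - 1/2) + \<i> * complex_of_real (t * (- ln t + ln (2*pi) + 1)) + E)"
proof -
  define s where "s = Complex \<sigma> t"
  define w where "w = (1 - s)/2"
  define z where "z = s/2"
  define z1 where "z1 = z + 1"
  define a where "a = 1 - \<sigma>"
  define b where "b = - \<sigma>"
  have t0: "t > 0" using assms by simp
  have a0: "a > 0" "b > 0" using assms by (auto simp: a_def b_def)
  have wC: "w = Complex (a/2) (-t/2)" by (simp add: w_def s_def a_def complex_eq_iff)
  have zC: "z = Complex (\<sigma>/2) (t/2)" by (simp add: z_def s_def complex_eq_iff)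
  have Imw: "Im w \<noteq> 0" and Imz: "Im z \<noteq> 0" and Imz1: "Im z1 \<noteq> 0"
    using t0 by (auto simp: wC zC z1_def)
  have t2: "t^2 \<ge> 1" using assms(3) by (simp add: one_le_power)
  have bw: "summable (\<lambda>k. norm (phi (w + of_nat k)))"
     "(\<Sum>k. norm (phi (w + of_nat k))) \<le> (1/3 + (1/5)/5 + (1/5)^2/(7*(1-1/5))) / ((2-\<sigma>) - 1 + t)"
  proof -
    have "2*2 \<le> (2-\<sigma>)*(2-\<sigma>)" using assms by (intro mult_mono) auto
    then have "(2-\<sigma>)^2 + t^2 \<ge> 5" using t2 by (simp add: power2_eq_square)
    then have R: "1/((2-\<sigma>)^2+t^2) \<le> 1/5" by (simp add: field_simps)
    show "summable (\<lambda>k. norm (phi (w + of_nat k)))"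
      "(\<Sum>k. norm (phi (w + of_nat k))) \<le> (1/3 + (1/5)/5 + (1/5)^2/(7*(1-1/5))) / ((2-\<sigma>) - 1 + t)"
    proof -
      have c1: "2 - \<sigma> = 2 * Re w + 1" unfolding wC a_def by simp
      have c2: "t = 2 * \<bar>Im w\<bar>" unfolding wC using t0 by simp
      have c3: "0 \<le> 2 - \<sigma>" using assms(2) by simp
      have c4: "0 < 2 - \<sigma> - 1 + t" using assms(2) t0 by simp
      have c5: "(1/5::real) < 1" by simp
      note X = sum_phi_bound[of w "2-\<sigma>" t "1/5", OF Imw c1 c2 c3 c4 R c5]
      show "summable (\<lambda>k. norm (phi (w + of_nat k)))" by (rule X(1))
      show "(\<Sum>k. norm (phi (w + of_nat k))) \<le> (1/3 + (1/5)/5 + (1/5)^2/(7*(1-1/5))) / ((2-\<sigma>) - 1 + t)"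
        by (rule X(2))
    qed
  qed
  have bz: "summable (\<lambda>k. norm (phi (z1 + of_nat k)))"
     "(\<Sum>k. norm (phi (z1 + of_nat k))) \<le> (1/3 + (4/29)/5 + (4/29)^2/(7*(1-4/29))) / ((\<sigma>+3) - 1 + t)"
  proof -
    have "(5/2)*(5/2) \<le> (\<sigma>+3)*(\<sigma>+3)" using assms by (intro mult_mono) auto
    then have "(\<sigma>+3)^2 + t^2 \<ge> 29/4" using t2 by (simp add: power2_eq_square)
    then have R: "1/((\<sigma>+3)^2+t^2) \<le> 4/29" by (simp add: field_simps)
    show "summable (\<lambda>k. norm (phi (z1 + of_nat k)))"
      "(\<Sum>k. norm (phi (z1 + of_nat k))) \<le> (1/3 + (4/29)/5 + (4/29)^2/(7*(1-4/29))) / ((\<sigma>+3) - 1 + t)"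
    proof -
      have c1: "\<sigma>+3 = 2 * Re z1 + 1" unfolding z1_def zC by simp
      have c2: "t = 2 * \<bar>Im z1\<bar>" unfolding z1_def zC using t0 by simp
      have c3: "0 \<le> \<sigma>+3" using assms(1) by simp
      have c4: "0 < \<sigma>+3 - 1 + t" using assms(1) t0 by simp
      have c5: "(4/29::real) < 1" by simp
      note X = sum_phi_bound[of z1 "\<sigma>+3" t "4/29", OF Imz1 c1 c2 c3 c4 R c5]
      show "summable (\<lambda>k. norm (phi (z1 + of_nat k)))" by (rule X(1))
      show "(\<Sum>k. norm (phi (z1 + of_nat k))) \<le> (1/3 + (4/29)/5 + (4/29)^2/(7*(1-4/29))) / ((\<sigma>+3) - 1 + t)"
        by (rule X(2))
    qed
  qed
  have sw: "summable (\<lambda>k. phi (w + of_nat k))" using bw(1) by (rule summable_norm_cancel)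
  have sz1: "summable (\<lambda>k. phi (z1 + of_nat k))" using bz(1) by (rule summable_norm_cancel)
  have zs: "\<And>k. z + of_nat (Suc k) = z1 + of_nat k" by (simp add: z1_def)
  have sz: "summable (\<lambda>k. phi (z + of_nat k))"
    using sz1 summable_Suc_iff[of "\<lambda>k. phi (z + of_nat k)"] by (simp only: zs)
  have splz: "(\<Sum>k. phi (z + of_nat k)) = phi z + (\<Sum>k. phi (z1 + of_nat k))"
    using suminf_split_head[OF sz] by (simp only: zs) simp
  define D where "D = (\<Sum>k. phi (w + of_nat k)) - (\<Sum>k. phi (z + of_nat k))"
  have Dn: "norm D \<le> (4/3)/t"
  proof -
    define r0 where "r0 = 1 / (norm (2*z+1))^2"
    have nn: "(norm (2*z+1))^2 = (\<sigma>+1)^2 + t^2" unfolding cmod_power2 by (simp add: zC)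
    have r0e: "r0 = 1/((\<sigma>+1)^2+t^2)" unfolding r0_def nn ..
    have "r0 < 1"
    proof -
      have "(\<sigma>+1)^2 > 0" using assms by simp
      then have "(\<sigma>+1)^2+t^2 > 1" using t2 by linarith
      then show ?thesis unfolding r0e by simp
    qed
    note P0 = phi_bound[OF Imz r0_def this]
    have "norm D \<le> norm (\<Sum>k. phi (w + of_nat k)) + norm (\<Sum>k. phi (z + of_nat k))"
      unfolding D_def by (rule norm_triangle_ineq4)
    also have "norm (\<Sum>k. phi (z + of_nat k)) \<le> norm (phi z) + norm (\<Sum>k. phi (z1 + of_nat k))"
      unfolding splz by (rule norm_triangle_ineq)
    also have "norm (\<Sum>k. phi (w + of_nat k)) \<le> (\<Sum>k. norm (phi (w + of_nat k)))"
      by (rule summable_norm[OF bw(1)])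
    also have "norm (\<Sum>k. phi (z1 + of_nat k)) \<le> (\<Sum>k. norm (phi (z1 + of_nat k)))"
      by (rule summable_norm[OF bz(1)])
    finally have D1: "norm D \<le> (\<Sum>k. norm (phi (w + of_nat k))) + norm (phi z) + (\<Sum>k. norm (phi (z1 + of_nat k)))"
      by simp
    have K1: "(1/3 + (1/5)/5 + (1/5)^2/(7*(1-1/5))) / ((2-\<sigma>) - 1 + t) \<le> (2/5)/(1-\<sigma>+t)"
    proof -
      have e: "(2-\<sigma>) - 1 + t = 1-\<sigma>+t" by simp
      have "(1/3 + (1/5)/5 + (1/5)^2/(7*(1-1/5))::real) \<le> 2/5" by (simp add: power2_eq_square)
      then show ?thesis unfolding e using assms by (intro divide_right_mono) auto
    qed
    have K2: "(1/3 + (4/29)/5 + (4/29)^2/(7*(1-4/29))) / ((\<sigma>+3) - 1 + t) \<le> (2/5)/(\<sigma>+2+t)"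
    proof -
      have "(1/3 + (4/29)/5 + (4/29)^2/(7*(1-4/29))::real) \<le> 2/5" by (simp add: power2_eq_square)
      moreover have e: "(\<sigma>+3) - 1 + t = \<sigma>+2+t" by simp
      ultimately show ?thesis unfolding e using assms by (intro divide_right_mono) auto
    qed
    have "t * ((\<Sum>k. norm (phi (w + of_nat k))) + norm (phi z) + (\<Sum>k. norm (phi (z1 + of_nat k)))) \<le> 4/3"
      by (rule numeric_D[OF assms r0e P0]) (use bw(2) K1 bz(2) K2 in linarith)+
    moreover have "t * norm D \<le> t * ((\<Sum>k. norm (phi (w + of_nat k))) + norm (phi z) + (\<Sum>k. norm (phi (z1 + of_nat k))))"
      using D1 t0 by (intro mult_left_mono) auto
    ultimately have "t * norm D \<le> 4/3" by linarith
    then show ?thesis using t0 by (simp add: field_simps)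
  qed
  define A where "A = ((1-\<sigma>)^2 + t^2)/4"
  define B where "B = (\<sigma>^2 + t^2)/4"
  have A0: "A > 0" and B0: "B > 0" using t0 by (auto simp: A_def B_def intro!: add_nonneg_pos)
  have nw: "norm w = sqrt A" unfolding wC A_def a_def by (simp add: complex_norm power_divide field_simps)
  have nz: "norm z = sqrt B" unfolding zC B_def by (simp add: complex_norm power_divide field_simps)
  have w0: "w \<noteq> 0" and z0: "z \<noteq> 0" using Imw Imz by auto
  define \<alpha> where "\<alpha> = arctan (a/t)"
  define \<beta> where "\<beta> = arctan (b/t)"
  have LnW: "Ln w = Complex (ln A / 2) (\<alpha> - pi/2)"
  proof (rule complex_eqI)
    show "Re (Ln w) = Re (Complex (ln A / 2) (\<alpha> - pi/2))" using w0 A0 by (simp add: nw ln_sqrt)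
    show "Im (Ln w) = Im (Complex (ln A / 2) (\<alpha> - pi/2))" unfolding wC \<alpha>_def using arg_w[OF a0(1) t0] by simp
  qed
  have LnZ: "Ln z = Complex (ln B / 2) (pi/2 + \<beta>)"
  proof (rule complex_eqI)
    show "Re (Ln z) = Re (Complex (ln B / 2) (pi/2 + \<beta>))" using z0 B0 by (simp add: nz ln_sqrt)
    show "Im (Ln z) = Im (Complex (ln B / 2) (pi/2 + \<beta>))" unfolding zC \<beta>_def b_def using arg_z[OF assms(2) t0] by simp
  qed
  have l4: "ln (4::real) = 2 * ln 2" using ln_realpow[of 2 2] by simp
  have lnA: "ln A = 2 * ln t + ln (1 + a^2/t^2) - 2 * ln 2"
  proof -
    have "A = t^2 * (1 + a^2/t^2) / 2^2" unfolding A_def a_def using t0 by (simp add: field_simps)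
    also have "ln \<dots> = ln (t^2) + ln (1 + a^2/t^2) - ln (2^2)"
    proof -
      have p: "0 < 1 + a^2/t^2" by (simp add: add_pos_nonneg)
      have "ln (t^2 * (1 + a^2/t^2) / 2^2) = ln (t^2 * (1 + a^2/t^2)) - ln (2^2)"
        using p t0 by (intro ln_divide_pos) auto
      also have "ln (t^2 * (1 + a^2/t^2)) = ln (t^2) + ln (1 + a^2/t^2)"
        using p t0 by (intro ln_mult_pos) auto
      finally show ?thesis .
    qed
    finally show ?thesis using t0 l4 by (simp add: ln_realpow)
  qed
  have lnB: "ln B = 2 * ln t + ln (1 + b^2/t^2) - 2 * ln 2"
  proof -
    have "B = t^2 * (1 + b^2/t^2) / 2^2" unfolding B_def b_def using t0 by (simp add: field_simps)
    also have "ln \<dots> = ln (t^2) + ln (1 + b^2/t^2) - ln (2^2)"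
    proof -
      have p: "0 < 1 + b^2/t^2" by (simp add: add_pos_nonneg)
      have "ln (t^2 * (1 + b^2/t^2) / 2^2) = ln (t^2 * (1 + b^2/t^2)) - ln (2^2)"
        using p t0 by (intro ln_divide_pos) auto
      also have "ln (t^2 * (1 + b^2/t^2)) = ln (t^2) + ln (1 + b^2/t^2)"
        using p t0 by (intro ln_mult_pos) auto
      finally show ?thesis .
    qed
    finally show ?thesis using t0 l4 by (simp add: ln_realpow)
  qed
  define C where "C = A powr (-\<sigma>/4) * B powr ((1-\<sigma>)/4) * pi powr (\<sigma> - 1/2)"
  define lnC where "lnC = (-\<sigma>/4) * ln A + ((1-\<sigma>)/4) * ln B + (\<sigma> - 1/2) * ln pi"
  have C0: "C > 0" unfolding C_def using A0 B0 by simp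
  have lnCe: "ln C = lnC" unfolding C_def lnC_def using A0 B0 by (simp add: ln_mult ln_powr)
  have Cexp: "complex_of_real C = exp (complex_of_real lnC)"
    using C0 lnCe by (metis exp_ln exp_of_real)
  have GR: "Gamma w / Gamma z = exp (FF w - FF z)" by (rule Gamma_ratio[OF Imw Imz sw sz])
  have FFd: "FF w - FF z = (w - 1/2) * Ln w - w - ((z - 1/2) * Ln z - z) + D"
    unfolding FF_def D_def by (simp add: algebra_simps)
  have pipow: "complex_of_real pi powr (s - 1/2) = exp ((s - 1/2) * complex_of_real (ln pi))"
    by (simp add: powr_def Ln_of_real)
  define E where "E = (s - 1/2) * complex_of_real (ln pi) + (FF w - FF z) - complex_of_real lnC
     - complex_of_real (\<sigma> - 1/2) - \<i> * complex_of_real (t * (- ln t + ln (2*pi) + 1))"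
  define M where "M = E - D"
  have Mdef: "M = (w - 1/2) * Ln w - w - ((z - 1/2) * Ln z - z) + (s - 1/2) * complex_of_real (ln pi)
      - complex_of_real lnC - complex_of_real (\<sigma> - 1/2) - \<i> * complex_of_real (t * (- ln t + ln (2*pi) + 1))"
    unfolding M_def E_def FFd by (simp add: algebra_simps)
  have ReM: "Re M = t/2 * (\<alpha> + \<beta>)"
    unfolding Mdef LnW LnZ lnC_def using wC zC
    by (simp add: s_def a_def algebra_simps) (simp add: field_simps)
  have ImM: "Im M = pi/4 + (b * \<alpha> + a * \<beta>)/2 - t/4 * (ln (1 + a^2/t^2) + ln (1 + b^2/t^2))"
    unfolding Mdef LnW LnZ lnC_def using wC zC
    by (simp add: s_def lnA lnB ln_mult a_def b_def algebra_simps) (simp add: field_simps)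
  have eqn: "complex_of_real pi powr (s - 1/2) * Gamma w / Gamma z
     = complex_of_real C * exp (complex_of_real (\<sigma> - 1/2) + \<i> * complex_of_real (t * (- ln t + ln (2*pi) + 1)) + E)"
  proof -
    have "complex_of_real pi powr (s - 1/2) * Gamma w / Gamma z = exp ((s - 1/2) * complex_of_real (ln pi)) * exp (FF w - FF z)"
      unfolding pipow GR[symmetric] by simp
    also have "\<dots> = exp (complex_of_real lnC) * exp (complex_of_real (\<sigma> - 1/2) + \<i> * complex_of_real (t * (- ln t + ln (2*pi) + 1)) + E)"
      unfolding exp_add[symmetric] E_def by (simp add: algebra_simps)
    finally show ?thesis unfolding Cexp .
  qed
  have bnd: "norm E \<le> pi/4 + (1 - 2*\<sigma>)/2 + (18*\<sigma>^2 - 18*\<sigma> + 19)/(12*t)"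
  proof -
    have E_eq: "E = M + D" unfolding M_def by simp
    have "norm E \<le> norm M + norm D" unfolding E_eq by (rule norm_triangle_ineq)
    also have "norm M \<le> \<bar>Re M\<bar> + \<bar>Im M\<bar>" by (rule cmod_le)
    finally have "norm E \<le> \<bar>Re M\<bar> + \<bar>Im M\<bar> + norm D" by simp
    moreover note bounds_M[OF assms]
    moreover have "(18*\<sigma>^2 - 18*\<sigma> + 19)/(12*t) = (a*b + (a^2+b^2)/4)/t + (4/3)/t"
      using t0 by (simp add: a_def b_def field_simps power2_eq_square)
    ultimately show ?thesis using Dn unfolding ReM ImM \<alpha>_def \<beta>_def a_def b_def by linarith
  qed
  have "\<exists>E::complex. norm E \<le> pi/4 + (1 - 2*\<sigma>)/2 + (18*\<sigma>^2 - 18*\<sigma> + 19)/(12*t) \<and>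
     complex_of_real pi powr (s - 1/2) * Gamma w / Gamma z
     = complex_of_real C * exp (complex_of_real (\<sigma> - 1/2) + \<i> * complex_of_real (t * (- ln t + ln (2*pi) + 1)) + E)"
    using bnd eqn by blast
  then show ?thesis unfolding C_def A_def B_def w_def z_def s_def .
qed

end
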